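(* Let $\Phi\colon\mathbb X\rightrightarrows\mathbb Y$ have closed graph, $(\bar x,\bar y)\in\operatorname{gph}\Phi$, $u\in\mathbb S_{\mathbb X}$, $\gamma>1$, and assume $\ker D^*_\gamma\Phi((\bar x,\bar y);(u,0))=\{0\}$. If for all $\alpha,\beta\ge0$ \[\widetilde D^*_\gamma\Phi((\bar x,\bar y);(u,0))(0)\cup\bigcup_{v\in\mathbb S_{\mathbb Y}}D^*_\gamma\Phi((\bar x,\bar y);(u,\alpha v))(\beta v)\subset\operatorname{Im}D^*\Phi(\bar x,\bar y),\] in particular if $\operatorname{Im}\widetilde D^*_\gamma\Phi((\bar x,\bar y);(u,0))\subset\operatorname{Im}D^*\Phi(\bar x,\bar y)$, then $\Phi$ is asymptotically regular at $(\bar x,\bar y)$ in direction $u$.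
   Context: $\widehat D^*,D^*$ regular and limiting coderivatives; $\ker\Psi=\{y^*\mid0\in\Psi(y^* )\}$, $\operatorname{Im}\Psi=\bigcup_{y^*}\Psi(y^* )$. Pseudo-coderivative of order $\gamma$ in direction $(u,v)\in\mathbb S_{\mathbb X}\times\mathbb Y$: $x^*\in D^*_\gamma\Phi((\bar x,\bar y);(u,v))(y^* )$ iff there are $u_k\to u$, $v_k\to v$, $x_k^*\to x^*$, $y_k^*\to y^*$, $t_k\searrow0$ with $(t_k\|u_k\|)^{\gamma-1}x_k^*\in\widehat D^*\Phi(\bar x+t_ku_k,\bar y+(t_k\|u_k\|)^\gamma v_k)(y_k^* )$. Gfrerer's pseudo-coderivative $\widetilde D^*_\gamma\Phi((\bar x,\bar y);(u,v))$: same with $\bar y+t_kv_k$ instead. Asymptotic regularity in direction $u$: for all $\{(x_k,y_k)\}\subset\operatorname{gph}\Phi$, $\{x_k^*\}$, $\{\lambda_k\}$, $x^*,y^*$ with $x_k\notin\Phi^{-1}(\bar y)$, $y_k\ne\bar y$, $x_k^*\in\widehat D^*\Phi(x_k,y_k)(\lambda_k)$, $x_k\to\bar x$, $y_k\to\bar y$, $x_k^*\to x^*$, $(x_k-\bar x)/\|x_k-\bar x\|\to u$, $(y_k-\bar y)/\|x_k-\bar x\|\to0$, $\|\lambda_k\|\to\infty$, $(y_k-\bar y)/\|y_k-\bar y\|-\lambda_k/\|\lambda_k\|\to0$, $(\|y_k-\bar y\|/\|x_k-\bar x\|)\lambda_k\to y^*$, one has $x^*\in\operatorname{Im}D^*\Phi(\bar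 x,\bar y)$. *)

theory Defs
  imports "HOL-Analysis.Analysis"
begin

definition gph :: "('a \<Rightarrow> 'b set) \<Rightarrow> ('a \<times> 'b) set" where
  "gph Phi = {(x, y). y \<in> Phi x}"

text \<open>Regular (Frechet) normal cone: z* with limsup_{z' -> z, z' in Omega}
  <z*, z' - z> / |z' - z| <= 0 (written out with epsilon-delta).\<close>
definition reg_normal :: "('a::real_inner) set \<Rightarrow> 'a \<Rightarrow> 'a set" where
  "reg_normal Omega z = {v. z \<in> Omega \<and>
     (\<forall>e>0. \<exists>d>0. \<forall>z'\<in>Omega. norm (z' - z) < d \<longrightarrow> inner v (z' - z) \<le> e * norm (z' - z))}"

definition reg_coderiv :: "('a::euclidean_space \<Rightarrow> 'b::euclidean_space set) \<Rightarrow> 'a \<Rightarrow> 'b \<Rightarrow> 'b \<Rightarrow> 'a set" where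
  "reg_coderiv Phi x y ystar = {xstar. (xstar, - ystar) \<in> reg_normal (gph Phi) (x, y)}"

definition lim_coderiv :: "('a::euclidean_space \<Rightarrow> 'b::euclidean_space set) \<Rightarrow> 'a \<Rightarrow> 'b \<Rightarrow> 'b \<Rightarrow> 'a set" where
  "lim_coderiv Phi xb yb ystar = {xstar. \<exists>xs ys xss yss.
     (\<forall>k. (xs k, ys k) \<in> gph Phi \<and> xss k \<in> reg_coderiv Phi (xs k) (ys k) (yss k)) \<and>
     xs \<longlonglongrightarrow> xb \<and> ys \<longlonglongrightarrow> yb \<and> xss \<longlonglongrightarrow> xstar \<and> yss \<longlonglongrightarrow> ystar}"

definition pcoderiv :: "real \<Rightarrow> ('a::euclidean_space \<Rightarrow> 'b::euclidean_space set) \<Rightarrow> 'a \<Rightarrow> 'b \<Rightarrow> 'a \<Rightarrow> 'b \<Rightarrow> 'b \<Rightarrow> 'a set" where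
  "pcoderiv gam Phi xb yb u v ystar = {xstar. \<exists>uk vk xk yk t.
     uk \<longlonglongrightarrow> u \<and> vk \<longlonglongrightarrow> v \<and> xk \<longlonglongrightarrow> xstar \<and> yk \<longlonglongrightarrow> ystar \<and>
     (\<forall>k. t k > 0) \<and> t \<longlonglongrightarrow> 0 \<and>
     (\<forall>k. ((t k * norm (uk k)) powr (gam - 1)) *\<^sub>R xk k \<in>
        reg_coderiv Phi (xb + t k *\<^sub>R uk k) (yb + ((t k * norm (uk k)) powr gam) *\<^sub>R vk k) (yk k))}"

definition gpcoderiv :: "real \<Rightarrow> ('a::euclidean_space \<Rightarrow> 'b::euclidean_space set) \<Rightarrow> 'a \<Rightarrow> 'b \<Rightarrow> 'a \<Rightarrow> 'b \<Rightarrow> 'b \<Rightarrow> 'a set" where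
  "gpcoderiv gam Phi xb yb u v ystar = {xstar. \<exists>uk vk xk yk t.
     uk \<longlonglongrightarrow> u \<and> vk \<longlonglongrightarrow> v \<and> xk \<longlonglongrightarrow> xstar \<and> yk \<longlonglongrightarrow> ystar \<and>
     (\<forall>k. t k > 0) \<and> t \<longlonglongrightarrow> 0 \<and>
     (\<forall>k. ((t k * norm (uk k)) powr (gam - 1)) *\<^sub>R xk k \<in>
        reg_coderiv Phi (xb + t k *\<^sub>R uk k) (yb + t k *\<^sub>R vk k) (yk k))}"

definition ker_sv :: "('b::zero \<Rightarrow> 'a::zero set) \<Rightarrow> 'b set" where
  "ker_sv Psi = {ystar. 0 \<in> Psi ystar}"

definition Im_sv :: "('b \<Rightarrow> 'a set) \<Rightarrow> 'a set" where
  "Im_sv Psi = (\<Union>ystar. Psi ystar)"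

definition asymp_regular :: "('a::euclidean_space \<Rightarrow> 'b::euclidean_space set) \<Rightarrow> 'a \<Rightarrow> 'b \<Rightarrow> 'a \<Rightarrow> bool" where
  "asymp_regular Phi xb yb u \<longleftrightarrow>
     (\<forall>(xs :: nat \<Rightarrow> 'a) (ys :: nat \<Rightarrow> 'b) (xss :: nat \<Rightarrow> 'a) (lam :: nat \<Rightarrow> 'b) xstar ystar.
       ((\<forall>k. (xs k, ys k) \<in> gph Phi \<and> yb \<notin> Phi (xs k) \<and> ys k \<noteq> yb \<and>
             xss k \<in> reg_coderiv Phi (xs k) (ys k) (lam k)) \<and>
        xs \<longlonglongrightarrow> xb \<and> ys \<longlonglongrightarrow> yb \<and> xss \<longlonglongrightarrow> xstar \<and>
        (\<lambda>k. (1 / norm (xs k - xb)) *\<^sub>R (xs k - xb)) \<longlonglongrightarrow> u \<and>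
        (\<lambda>k. (1 / norm (xs k - xb)) *\<^sub>R (ys k - yb)) \<longlonglongrightarrow> 0 \<and>
        filterlim (\<lambda>k. norm (lam k)) at_top sequentially \<and>
        (\<lambda>k. (1 / norm (ys k - yb)) *\<^sub>R (ys k - yb) - (1 / norm (lam k)) *\<^sub>R lam k) \<longlonglongrightarrow> 0 \<and>
        (\<lambda>k. (norm (ys k - yb) / norm (xs k - xb)) *\<^sub>R lam k) \<longlonglongrightarrow> ystar)
       \<longrightarrow> xstar \<in> Im_sv (lim_coderiv Phi xb yb))"

end

theory Submission
  imports Defs
begin

lemma reg_coderiv_scale:
  assumes "x \<in> reg_coderiv Phi a b l" "c \<ge> 0"
  shows "c *\<^sub>R x \<in> reg_coderiv Phi a b (c *\<^sub>R l)"
proof (cases "c = 0")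
  case True
  from assms(1) have "(a, b) \<in> gph Phi" by (simp add: reg_coderiv_def reg_normal_def)
  then show ?thesis using True
    by (simp add: reg_coderiv_def reg_normal_def zero_prod_def[symmetric])
next
  case False
  then have cp: "c > 0" using assms(2) by simp
  from assms(1) have mem: "(a, b) \<in> gph Phi" and
    H: "\<forall>e>0. \<exists>d>0. \<forall>z'\<in>gph Phi. norm (z' - (a,b)) < d \<longrightarrow> inner (x, -l) (z' - (a,b)) \<le> e * norm (z' - (a,b))"
    by (auto simp add: reg_coderiv_def reg_normal_def)
  have "\<exists>d>0. \<forall>z'\<in>gph Phi. norm (z' - (a,b)) < d \<longrightarrow> inner (c *\<^sub>R x, - (c *\<^sub>R l)) (z' - (a,b)) \<le> e * norm (z' - (a,b))"
    if e: "e > 0" for e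
  proof -
    from H e cp obtain d where d: "d > 0" and
      hd: "\<forall>z'\<in>gph Phi. norm (z' - (a,b)) < d \<longrightarrow> inner (x, -l) (z' - (a,b)) \<le> (e / c) * norm (z' - (a,b))"
      by (meson divide_pos_pos)
    have "inner (c *\<^sub>R x, - (c *\<^sub>R l)) (z' - (a,b)) \<le> e * norm (z' - (a,b))"
      if "z' \<in> gph Phi" "norm (z' - (a,b)) < d" for z'
    proof -
      have eq: "(c *\<^sub>R x, - (c *\<^sub>R l)) = c *\<^sub>R (x, -l)" by simp
      have "inner (x, -l) (z' - (a,b)) \<le> (e / c) * norm (z' - (a,b))" using hd that by blast
      then have "c * inner (x, -l) (z' - (a,b)) \<le> c * ((e / c) * norm (z' - (a,b)))"
        by (rule mult_left_mono) (use cp in auto)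
      also have "\<dots> = e * norm (z' - (a,b))" using cp by simp
      finally show ?thesis by (simp only: eq inner_scaleR_left)
    qed
    then show ?thesis using d by blast
  qed
  then show ?thesis using mem by (simp add: reg_coderiv_def reg_normal_def)
qed

lemma freq_idx:
  assumes "\<forall>n. \<exists>k\<ge>n. P k"
  shows "\<exists>r. filterlim r sequentially sequentially \<and> (\<forall>n. P (r n))"
proof -
  from assms obtain r where r: "\<forall>n. r n \<ge> n \<and> P (r n)" by metis
  have "filterlim r sequentially sequentially"
    unfolding filterlim_at_top eventually_sequentially using r by (meson order_trans)
  then show ?thesis using r by blast
qed

lemma notfreq_top:
  fixes g :: "nat \<Rightarrow> real"
  assumes "\<not> (\<exists>B. \<forall>n. \<exists>k\<ge>n. g k \<le> B)"
  shows "filterlim g at_top sequentially"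
  unfolding filterlim_at_top eventually_sequentially
  using assms by (meson not_le less_imp_le)


lemma pc_intro:
  fixes xs :: "nat \<Rightarrow> 'a::euclidean_space" and ys :: "nat \<Rightarrow> 'b::euclidean_space"
  assumes r: "filterlim r sequentially sequentially"
    and xk: "(\<lambda>n. xk (r n)) \<longlonglongrightarrow> x" and yk: "(\<lambda>n. yk (r n)) \<longlonglongrightarrow> y"
    and vk: "(\<lambda>n. vk (r n)) \<longlonglongrightarrow> v"
    and U: "(\<lambda>k. (1 / norm (xs k - xb)) *\<^sub>R (xs k - xb)) \<longlonglongrightarrow> u" and xs: "xs \<longlonglongrightarrow> xb"
    and ne: "\<forall>k. xs k \<noteq> xb"
    and ys: "\<forall>k. ys k = yb + (norm (xs k - xb) powr gam) *\<^sub>R vk k"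
    and mem: "\<forall>k. norm (xs k - xb) powr (gam - 1) *\<^sub>R xk k \<in> reg_coderiv Phi (xs k) (ys k) (yk k)"
  shows "x \<in> pcoderiv gam Phi xb yb u v y"
proof -
  define t where "t k = norm (xs k - xb)" for k
  define U' where "U' k = (1 / t k) *\<^sub>R (xs k - xb)" for k
  have tp: "t k > 0" for k using ne by (simp add: t_def)
  have nU: "norm (U' k) = 1" for k using tp by (simp add: U'_def t_def)
  have eqx: "xb + t k *\<^sub>R U' k = xs k" for k using tp[of k] by (simp add: U'_def)
  have t0: "t \<longlonglongrightarrow> 0"
  proof -
    have "(\<lambda>k. xs k - xb) \<longlonglongrightarrow> 0" using xs by (simp add: LIM_zero)
    then show ?thesis unfolding t_def by (simp add: tendsto_norm_zero_iff)
  qed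
  have U1: "(\<lambda>n. U' (r n)) \<longlonglongrightarrow> u"
    using filterlim_compose[OF U r] by (simp add: U'_def t_def)
  have t1: "(\<lambda>n. t (r n)) \<longlonglongrightarrow> 0" using filterlim_compose[OF t0 r] .
  show ?thesis unfolding pcoderiv_def
    apply (rule CollectI)
    apply (rule exI[of _ "\<lambda>n. U' (r n)"], rule exI[of _ "\<lambda>n. vk (r n)"],
        rule exI[of _ "\<lambda>n. xk (r n)"], rule exI[of _ "\<lambda>n. yk (r n)"], rule exI[of _ "\<lambda>n. t (r n)"])
    using U1 vk xk yk tp t1 mem ys eqx nU by (simp add: t_def)
qed

lemma gp_intro:
  fixes xs :: "nat \<Rightarrow> 'a::euclidean_space" and ys :: "nat \<Rightarrow> 'b::euclidean_space"
  assumes r: "filterlim r sequentially sequentially"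
    and xk: "(\<lambda>n. xk (r n)) \<longlonglongrightarrow> x" and yk: "(\<lambda>n. yk (r n)) \<longlonglongrightarrow> y"
    and vk: "(\<lambda>n. vk (r n)) \<longlonglongrightarrow> v"
    and U: "(\<lambda>k. (1 / norm (xs k - xb)) *\<^sub>R (xs k - xb)) \<longlonglongrightarrow> u" and xs: "xs \<longlonglongrightarrow> xb"
    and ne: "\<forall>k. xs k \<noteq> xb"
    and ys: "\<forall>k. ys k = yb + norm (xs k - xb) *\<^sub>R vk k"
    and mem: "\<forall>k. norm (xs k - xb) powr (gam - 1) *\<^sub>R xk k \<in> reg_coderiv Phi (xs k) (ys k) (yk k)"
  shows "x \<in> gpcoderiv gam Phi xb yb u v y"
proof -
  define t where "t k = norm (xs k - xb)" for k
  define U' where "U' k = (1 / t k) *\<^sub>R (xs k - xb)" for k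
  have tp: "t k > 0" for k using ne by (simp add: t_def)
  have nU: "norm (U' k) = 1" for k using tp by (simp add: U'_def t_def)
  have eqx: "xb + t k *\<^sub>R U' k = xs k" for k using tp[of k] by (simp add: U'_def)
  have t0: "t \<longlonglongrightarrow> 0"
  proof -
    have "(\<lambda>k. xs k - xb) \<longlonglongrightarrow> 0" using xs by (simp add: LIM_zero)
    then show ?thesis unfolding t_def by (simp add: tendsto_norm_zero_iff)
  qed
  have U1: "(\<lambda>n. U' (r n)) \<longlonglongrightarrow> u"
    using filterlim_compose[OF U r] by (simp add: U'_def t_def)
  have t1: "(\<lambda>n. t (r n)) \<longlonglongrightarrow> 0" using filterlim_compose[OF t0 r] .
  show ?thesis unfolding gpcoderiv_def
    apply (rule CollectI)
    apply (rule exI[of _ "\<lambda>n. U' (r n)"], rule exI[of _ "\<lambda>n. vk (r n)"],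
        rule exI[of _ "\<lambda>n. xk (r n)"], rule exI[of _ "\<lambda>n. yk (r n)"], rule exI[of _ "\<lambda>n. t (r n)"])
    using U1 vk xk yk tp t1 mem ys eqx nU by (simp add: t_def)
qed


theorem mainTheorem10:
  fixes Phi :: "'a::euclidean_space \<Rightarrow> 'b::euclidean_space set"
    and xb :: 'a and yb :: 'b and u :: 'a and gam :: real
  assumes "closed (gph Phi)"
    and "(xb, yb) \<in> gph Phi"
    and "norm u = 1"
    and "gam > 1"
    and "ker_sv (pcoderiv gam Phi xb yb u 0) = {0}"
    and "(\<forall>\<alpha> \<beta>. \<alpha> \<ge> 0 \<longrightarrow> \<beta> \<ge> 0 \<longrightarrow>
            gpcoderiv gam Phi xb yb u 0 0 \<union>
            (\<Union>v\<in>sphere 0 1. pcoderiv gam Phi xb yb u (\<alpha> *\<^sub>R v) (\<beta> *\<^sub>R v))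
            \<subseteq> Im_sv (lim_coderiv Phi xb yb))
         \<or> Im_sv (gpcoderiv gam Phi xb yb u 0) \<subseteq> Im_sv (lim_coderiv Phi xb yb)"
  shows "asymp_regular Phi xb yb u"
  unfolding asymp_regular_def
proof (intro allI impI)
  fix xs :: "nat \<Rightarrow> 'a" and ys :: "nat \<Rightarrow> 'b" and xss :: "nat \<Rightarrow> 'a" and lam :: "nat \<Rightarrow> 'b"
    and xstar :: 'a and ystar :: 'b
  assume H: "(\<forall>k. (xs k, ys k) \<in> gph Phi \<and> yb \<notin> Phi (xs k) \<and> ys k \<noteq> yb \<and>
             xss k \<in> reg_coderiv Phi (xs k) (ys k) (lam k)) \<and>
        xs \<longlonglongrightarrow> xb \<and> ys \<longlonglongrightarrow> yb \<and> xss \<longlonglongrightarrow> xstar \<and>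
        (\<lambda>k. (1 / norm (xs k - xb)) *\<^sub>R (xs k - xb)) \<longlonglongrightarrow> u \<and>
        (\<lambda>k. (1 / norm (xs k - xb)) *\<^sub>R (ys k - yb)) \<longlonglongrightarrow> 0 \<and>
        filterlim (\<lambda>k. norm (lam k)) at_top sequentially \<and>
        (\<lambda>k. (1 / norm (ys k - yb)) *\<^sub>R (ys k - yb) - (1 / norm (lam k)) *\<^sub>R lam k) \<longlonglongrightarrow> 0 \<and>
        (\<lambda>k. (norm (ys k - yb) / norm (xs k - xb)) *\<^sub>R lam k) \<longlonglongrightarrow> ystar"
  then have H1: "\<forall>k. (xs k, ys k) \<in> gph Phi \<and> yb \<notin> Phi (xs k) \<and> ys k \<noteq> yb \<and>
             xss k \<in> reg_coderiv Phi (xs k) (ys k) (lam k)"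
    and xsl: "xs \<longlonglongrightarrow> xb" and xssl: "xss \<longlonglongrightarrow> xstar"
    and Ul: "(\<lambda>k. (1 / norm (xs k - xb)) *\<^sub>R (xs k - xb)) \<longlonglongrightarrow> u"
    and Y0: "(\<lambda>k. (1 / norm (xs k - xb)) *\<^sub>R (ys k - yb)) \<longlonglongrightarrow> 0"
    and lamI: "filterlim (\<lambda>k. norm (lam k)) at_top sequentially"
    and EW: "(\<lambda>k. (1 / norm (ys k - yb)) *\<^sub>R (ys k - yb) - (1 / norm (lam k)) *\<^sub>R lam k) \<longlonglongrightarrow> 0"
    and YS: "(\<lambda>k. (norm (ys k - yb) / norm (xs k - xb)) *\<^sub>R lam k) \<longlonglongrightarrow> ystar"
    by auto
  define \<tau> where "\<tau> k = norm (xs k - xb)" for k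
  define s where "s k = norm (ys k - yb)" for k
  define R where "R k = s k / \<tau> k powr gam" for k
  define \<rho> where "\<rho> k = \<tau> k powr (gam - 1) * norm (lam k)" for k
  define W where "W k = (1 / norm (lam k)) *\<^sub>R lam k" for k
  define E where "E k = (1 / s k) *\<^sub>R (ys k - yb)" for k
  define F where "F k = \<tau> k powr (gam - 1) *\<^sub>R lam k" for k
  define V where "V k = (1 / \<tau> k powr gam) *\<^sub>R (ys k - yb)" for k
  define Z where "Z k = (1 / \<tau> k) *\<^sub>R (ys k - yb)" for k
  define G where "G k = s k / \<tau> k * norm (lam k)" for k
  have ne: "\<forall>k. xs k \<noteq> xb"
  proof
    fix k show "xs k \<noteq> xb" using H1 assms(2) by (metis gph_def case_prod_conv mem_Collect_eq)
  qed
  have \<tau>p: "\<tau> k > 0" for k using ne by (simp add: \<tau>_def)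
  have sp: "s k > 0" for k using H1 by (simp add: s_def)
  have pw: "\<tau> k powr gam = \<tau> k powr (gam - 1) * \<tau> k" for k
    using \<tau>p[of k] powr_mult_base[of "\<tau> k" "gam - 1"] by (simp add: mult.commute less_imp_le)
  have pwp: "\<tau> k powr (gam - 1) > 0" for k using \<tau>p[of k] by simp
  have Rp: "R k > 0" for k using \<tau>p[of k] sp[of k] by (simp add: R_def)
  have \<rho>eq: "\<rho> k = G k * inverse (R k)" for k
    using \<tau>p[of k] sp[of k] pwp[of k] unfolding \<rho>_def G_def R_def pw by (simp add: field_simps)
  have Gl: "G \<longlonglongrightarrow> norm ystar"
  proof -
    have "(\<lambda>k. norm ((norm (ys k - yb) / norm (xs k - xb)) *\<^sub>R lam k)) \<longlonglongrightarrow> norm ystar"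
      using YS by (rule tendsto_norm)
    moreover have "G = (\<lambda>k. norm ((norm (ys k - yb) / norm (xs k - xb)) *\<^sub>R lam k))"
      by (simp add: fun_eq_iff G_def s_def \<tau>_def)
    ultimately show ?thesis by simp
  qed
  have Feq: "F k = \<rho> k *\<^sub>R W k" for k
    by (cases "lam k = 0") (simp_all add: F_def \<rho>_def W_def)
  have nF: "norm (F k) = \<rho> k" for k using pwp[of k] by (simp add: F_def \<rho>_def)
  have nE: "norm (E k) = 1" for k using sp[of k] by (simp add: E_def s_def)
  have nW: "norm (W k) \<le> 1" for k by (cases "lam k = 0") (simp_all add: W_def)
  have VRE: "V k = R k *\<^sub>R E k" for k using sp[of k] by (simp add: V_def R_def E_def)
  have nV: "norm (V k) = R k" for k using Rp[of k] by (simp add: VRE nE)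
  have ysV: "\<forall>k. ys k = yb + (norm (xs k - xb) powr gam) *\<^sub>R V k"
    using \<tau>p by (simp add: V_def \<tau>_def)
  have ysZ: "\<forall>k. ys k = yb + norm (xs k - xb) *\<^sub>R Z k"
    using \<tau>p by (simp add: Z_def \<tau>_def)
  have memF: "\<forall>k. norm (xs k - xb) powr (gam - 1) *\<^sub>R xss k \<in> reg_coderiv Phi (xs k) (ys k) (F k)"
    using H1 reg_coderiv_scale pwp unfolding F_def \<tau>_def by (meson less_imp_le)
  have "Z = (\<lambda>k. (1 / norm (xs k - xb)) *\<^sub>R (ys k - yb))" by (simp add: fun_eq_iff Z_def \<tau>_def)
  with Y0 have Zl: "Z \<longlonglongrightarrow> 0" by simp
  have "(\<lambda>k. E k - W k) = (\<lambda>k. (1 / norm (ys k - yb)) *\<^sub>R (ys k - yb) - (1 / norm (lam k)) *\<^sub>R lam k)"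
    by (simp add: fun_eq_iff E_def W_def s_def)
  with EW have EWl: "(\<lambda>k. E k - W k) \<longlonglongrightarrow> 0" by simp
  have Im: "xstar \<in> Im_sv (lim_coderiv Phi xb yb)" if "xstar \<in> lim_coderiv Phi xb yb y" for y
    using that unfolding Im_sv_def by blast
  have caseA: False if r: "filterlim r sequentially sequentially"
      and \<rho>r: "filterlim (\<lambda>n. \<rho> (r n)) at_top sequentially" for r
  proof -
    have nWb: "bounded (range (\<lambda>n. W (r n)))"
      unfolding bounded_iff using nW by blast
    obtain q l where q: "strict_mono q" and Wl: "(\<lambda>n. W (r (q n))) \<longlonglongrightarrow> l"
      using bounded_imp_convergent_subsequence[OF nWb] unfolding o_def by blast
    define r' where "r' n = r (q n)" for n
    have r': "filterlim r' sequentially sequentially"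
      unfolding r'_def using filterlim_compose[OF r filterlim_subseq[OF q]] .
    have \<rho>r': "filterlim (\<lambda>n. \<rho> (r' n)) at_top sequentially"
      unfolding r'_def using filterlim_compose[OF \<rho>r filterlim_subseq[OF q]] .
    have inv0: "(\<lambda>n. inverse (\<rho> (r' n))) \<longlonglongrightarrow> 0" using tendsto_inverse_0_at_top[OF \<rho>r'] .
    have ev\<rho>: "eventually (\<lambda>n. \<rho> (r' n) \<ge> 1) sequentially"
      using \<rho>r' unfolding filterlim_at_top by blast
    define xk where "xk k = inverse (\<rho> k) *\<^sub>R xss k" for k
    define yk where "yk k = (\<tau> k powr (gam - 1) * inverse (\<rho> k)) *\<^sub>R lam k" for k
    have ykW: "yk k = W k" for k
      using pwp[of k] by (cases "lam k = 0") (simp_all add: yk_def W_def \<rho>_def field_simps)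
    have mem: "\<forall>k. norm (xs k - xb) powr (gam - 1) *\<^sub>R xk k \<in> reg_coderiv Phi (xs k) (ys k) (yk k)"
    proof
      fix k
      have c: "\<tau> k powr (gam - 1) * inverse (\<rho> k) \<ge> 0"
        using pwp[of k] by (simp add: \<rho>_def)
      have "(\<tau> k powr (gam - 1) * inverse (\<rho> k)) *\<^sub>R xss k \<in> reg_coderiv Phi (xs k) (ys k) (yk k)"
        unfolding yk_def using reg_coderiv_scale[OF _ c] H1 by blast
      then show "norm (xs k - xb) powr (gam - 1) *\<^sub>R xk k \<in> reg_coderiv Phi (xs k) (ys k) (yk k)"
        by (simp add: xk_def \<tau>_def)
    qed
    have xssr: "(\<lambda>n. xss (r' n)) \<longlonglongrightarrow> xstar" using filterlim_compose[OF xssl r'] .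
    have xkl: "(\<lambda>n. xk (r' n)) \<longlonglongrightarrow> 0"
      using tendsto_scaleR[OF inv0 xssr] by (simp add: xk_def)
    have ykl: "(\<lambda>n. yk (r' n)) \<longlonglongrightarrow> l" using Wl by (simp add: ykW r'_def)
    have Gr: "(\<lambda>n. G (r' n)) \<longlonglongrightarrow> norm ystar" using filterlim_compose[OF Gl r'] .
    have "(\<lambda>n. G (r' n) * inverse (\<rho> (r' n))) \<longlonglongrightarrow> norm ystar * 0"
      using tendsto_mult[OF Gr inv0] .
    moreover have "eventually (\<lambda>n. G (r' n) * inverse (\<rho> (r' n)) = norm (V (r' n))) sequentially"
      using ev\<rho>
    proof (rule eventually_mono)
      fix n assume h: "\<rho> (r' n) \<ge> 1"
      have "G (r' n) = R (r' n) * \<rho> (r' n)"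
        using Rp[of "r' n"] \<rho>eq[of "r' n"] by (simp add: field_simps)
      then show "G (r' n) * inverse (\<rho> (r' n)) = norm (V (r' n))"
        using h nV[of "r' n"] by (simp add: field_simps)
    qed
    ultimately have "(\<lambda>n. norm (V (r' n))) \<longlonglongrightarrow> 0" using Lim_transform_eventually by fastforce
    then have Vl: "(\<lambda>n. V (r' n)) \<longlonglongrightarrow> 0" by (simp add: tendsto_norm_zero_iff)
    have "0 \<in> pcoderiv gam Phi xb yb u 0 l"
      using pc_intro[OF r' xkl ykl Vl Ul xsl ne ysV mem] .
    then have "l \<in> ker_sv (pcoderiv gam Phi xb yb u 0)" by (simp add: ker_sv_def)
    then have l0: "l = 0" using assms(5) by blast
    have "(\<lambda>n. norm (W (r' n))) \<longlonglongrightarrow> 0" using tendsto_norm[OF Wl] l0 by (simp add: r'_def)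
    moreover have "eventually (\<lambda>n. norm (W (r' n)) = 1) sequentially"
    proof -
      have "eventually (\<lambda>n. norm (lam (r' n)) \<ge> 1) sequentially"
        using filterlim_compose[OF lamI r'] unfolding filterlim_at_top by blast
      then show ?thesis by (rule eventually_mono) (auto simp add: W_def)
    qed
    ultimately have "(\<lambda>n. 1::real) \<longlonglongrightarrow> 0" using Lim_transform_eventually by fastforce
    then show False by (simp add: LIMSEQ_const_iff)
  qed
  have xssr: "(\<lambda>n. xss (r n)) \<longlonglongrightarrow> xstar" if "filterlim r sequentially sequentially" for r
    using filterlim_compose[OF xssl that] .
  show "xstar \<in> Im_sv (lim_coderiv Phi xb yb)"
  proof (cases "\<exists>B. \<forall>n. \<exists>k\<ge>n. R k \<le> B")
    case False
    then have Rt: "filterlim R at_top sequentially" by (rule notfreq_top)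
    have "(\<lambda>k. G k * inverse (R k)) \<longlonglongrightarrow> norm ystar * 0"
      using tendsto_mult[OF Gl tendsto_inverse_0_at_top[OF Rt]] .
    moreover have "\<rho> = (\<lambda>k. G k * inverse (R k))" by (simp add: fun_eq_iff \<rho>eq)
    ultimately have "\<rho> \<longlonglongrightarrow> 0" by simp
    then have "(\<lambda>k. norm (F k)) \<longlonglongrightarrow> 0" by (simp add: nF)
    then have Fl: "(\<lambda>n. F ((\<lambda>x. x) n)) \<longlonglongrightarrow> 0" by (simp add: tendsto_norm_zero_iff)
    have Zl': "(\<lambda>n. Z ((\<lambda>x. x) n)) \<longlonglongrightarrow> 0" using Zl by simp
    have xl: "(\<lambda>n. xss ((\<lambda>x. x) n)) \<longlonglongrightarrow> xstar" using xssl by simp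
    have gp: "xstar \<in> gpcoderiv gam Phi xb yb u 0 0"
      using gp_intro[OF filterlim_ident xl Fl Zl' Ul xsl ne ysZ memF] .
    from assms(6) show ?thesis
    proof
      assume "\<forall>\<alpha> \<beta>. \<alpha> \<ge> 0 \<longrightarrow> \<beta> \<ge> 0 \<longrightarrow>
            gpcoderiv gam Phi xb yb u 0 0 \<union>
            (\<Union>v\<in>sphere 0 1. pcoderiv gam Phi xb yb u (\<alpha> *\<^sub>R v) (\<beta> *\<^sub>R v))
            \<subseteq> Im_sv (lim_coderiv Phi xb yb)"
      note this[rule_format, of 0 0, OF order_refl order_refl]
      then have "gpcoderiv gam Phi xb yb u 0 0 \<subseteq> Im_sv (lim_coderiv Phi xb yb)"
        by (rule le_supE)
      then show ?thesis using gp by (rule subsetD)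
    next
      assume "Im_sv (gpcoderiv gam Phi xb yb u 0) \<subseteq> Im_sv (lim_coderiv Phi xb yb)"
      moreover have "xstar \<in> Im_sv (gpcoderiv gam Phi xb yb u 0)"
        unfolding Im_sv_def using gp by (rule UN_I[OF UNIV_I])
      ultimately show ?thesis by (rule subsetD)
    qed
  next
    case True
    then obtain B where "\<forall>n. \<exists>k\<ge>n. R k \<le> B" by blast
    then obtain r1 where r1: "filterlim r1 sequentially sequentially" and R1: "\<forall>n. R (r1 n) \<le> B"
      using freq_idx[where P="\<lambda>k. R k \<le> B"] by blast
    have "\<exists>B2. \<forall>n. \<exists>k\<ge>n. \<rho> (r1 k) \<le> B2"
    proof (rule ccontr)
      assume "\<not> (\<exists>B2. \<forall>n. \<exists>k\<ge>n. \<rho> (r1 k) \<le> B2)"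
      then have "filterlim (\<lambda>k. \<rho> (r1 k)) at_top sequentially" by (rule notfreq_top)
      then show False using caseA[OF r1] by blast
    qed
    then obtain B2 where "\<forall>n. \<exists>k\<ge>n. \<rho> (r1 k) \<le> B2" by blast
    then obtain r2 where r2: "filterlim r2 sequentially sequentially" and R2: "\<forall>n. \<rho> (r1 (r2 n)) \<le> B2"
      using freq_idx[where P="\<lambda>k. \<rho> (r1 k) \<le> B2"] by blast
    define r12 where "r12 n = r1 (r2 n)" for n
    have r12: "filterlim r12 sequentially sequentially"
      unfolding r12_def using filterlim_compose[OF r1 r2] .
    define T where "T k = (F k, E k, R k)" for k
    have "range (\<lambda>n. T (r12 n)) \<subseteq> cball 0 B2 \<times> (cball 0 1 \<times> cball 0 B)"
    proof
      fix z assume "z \<in> range (\<lambda>n. T (r12 n))"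
      then obtain n where z: "z = T (r12 n)" by blast
      have "norm (F (r12 n)) \<le> B2" using R2 nF by (simp add: r12_def)
      moreover have "norm (E (r12 n)) \<le> 1" using nE by simp
      moreover have "norm (R (r12 n)) \<le> B" using R1 Rp[of "r12 n"] by (simp add: r12_def)
      ultimately show "z \<in> cball 0 B2 \<times> (cball 0 1 \<times> cball 0 B)" by (simp add: z T_def)
    qed
    then have "bounded (range (\<lambda>n. T (r12 n)))"
      by (rule bounded_subset[OF bounded_Times[OF bounded_cball bounded_Times[OF bounded_cball bounded_cball]]])
    then obtain q L where q: "strict_mono q" and TL: "(\<lambda>n. T (r12 (q n))) \<longlonglongrightarrow> L"
      using bounded_imp_convergent_subsequence unfolding o_def by blast
    define r where "r n = r12 (q n)" for n
    have r: "filterlim r sequentially sequentially"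
      unfolding r_def using filterlim_compose[OF r12 filterlim_subseq[OF q]] .
    obtain y' e \<alpha> where L: "L = (y', e, \<alpha>)" by (cases L) auto
    have Fl: "(\<lambda>n. F (r n)) \<longlonglongrightarrow> y'" using tendsto_fst[OF TL] by (simp add: L T_def r_def)
    have El: "(\<lambda>n. E (r n)) \<longlonglongrightarrow> e" using tendsto_fst[OF tendsto_snd[OF TL]] by (simp add: L T_def r_def)
    have Rl: "(\<lambda>n. R (r n)) \<longlonglongrightarrow> \<alpha>" using tendsto_snd[OF tendsto_snd[OF TL]] by (simp add: L T_def r_def)
    have "(\<lambda>n. norm (E (r n))) \<longlonglongrightarrow> norm e" using tendsto_norm[OF El] .
    then have ne1: "norm e = 1" using nE by (simp add: LIMSEQ_const_iff)
    have a0: "\<alpha> \<ge> 0" using Rl by (rule LIMSEQ_le_const) (use Rp in \<open>auto intro: less_imp_le\<close>)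
    have Vl: "(\<lambda>n. V (r n)) \<longlonglongrightarrow> \<alpha> *\<^sub>R e" using tendsto_scaleR[OF Rl El] by (simp add: VRE)
    have \<rho>l: "(\<lambda>n. \<rho> (r n)) \<longlonglongrightarrow> norm y'" using tendsto_norm[OF Fl] by (simp add: nF)
    have "(\<lambda>n. E (r n) - (E (r n) - W (r n))) \<longlonglongrightarrow> e - 0"
      using tendsto_diff[OF El filterlim_compose[OF EWl r]] .
    then have Wl: "(\<lambda>n. W (r n)) \<longlonglongrightarrow> e" by simp
    have Fl2: "(\<lambda>n. F (r n)) \<longlonglongrightarrow> norm y' *\<^sub>R e" using tendsto_scaleR[OF \<rho>l Wl] by (simp add: Feq)
    have y'eq: "y' = norm y' *\<^sub>R e" using LIMSEQ_unique[OF Fl Fl2] .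
    have pc: "xstar \<in> pcoderiv gam Phi xb yb u (\<alpha> *\<^sub>R e) (norm y' *\<^sub>R e)"
      using pc_intro[OF r xssr[OF r] Fl2 Vl Ul xsl ne ysV memF] .
    have gp: "xstar \<in> gpcoderiv gam Phi xb yb u 0 y'"
      using gp_intro[OF r xssr[OF r] Fl filterlim_compose[OF Zl r] Ul xsl ne ysZ memF] .
    have es: "e \<in> sphere 0 1" using ne1 by simp
    from assms(6) show ?thesis
    proof
      assume A: "\<forall>\<alpha> \<beta>. \<alpha> \<ge> 0 \<longrightarrow> \<beta> \<ge> 0 \<longrightarrow>
            gpcoderiv gam Phi xb yb u 0 0 \<union>
            (\<Union>v\<in>sphere 0 1. pcoderiv gam Phi xb yb u (\<alpha> *\<^sub>R v) (\<beta> *\<^sub>R v))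
            \<subseteq> Im_sv (lim_coderiv Phi xb yb)"
      have "xstar \<in> (\<Union>v\<in>sphere 0 1. pcoderiv gam Phi xb yb u (\<alpha> *\<^sub>R v) (norm y' *\<^sub>R v))"
        using pc es by blast
      moreover have "(\<Union>v\<in>sphere 0 1. pcoderiv gam Phi xb yb u (\<alpha> *\<^sub>R v) (norm y' *\<^sub>R v))
            \<subseteq> Im_sv (lim_coderiv Phi xb yb)"
        using A[rule_format, of \<alpha> "norm y'", OF a0 norm_ge_zero] by (rule le_supE)
      ultimately show ?thesis by (rule subsetD[rotated])
    next
      assume "Im_sv (gpcoderiv gam Phi xb yb u 0) \<subseteq> Im_sv (lim_coderiv Phi xb yb)"
      moreover have "xstar \<in> Im_sv (gpcoderiv gam Phi xb yb u 0)"
        unfolding Im_sv_def using gp by (rule UN_I[OF UNIV_I])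
      ultimately show ?thesis by (rule subsetD)
    qed
  qed
qed

end
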